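(* Let $X$ be a set of cardinality at least $2^{\aleph_0}$, considered as a discrete topological space. Then for every formula $A$ of $\mathcal{L}_\nabla$: (i) if $X\vDash_{i\mathbf{ST}}A$ then $i\mathbf{STL}\vdash A$; (ii) if $X\vDash_{i\mathbf{ST}(F)}A$ then $i\mathbf{STL}(F)\vdash A$; (iii) if $X\vDash_{i\mathbf{ST}(wF)}A$ then $i\mathbf{STL}(wF)\vdash A$.
   Context: Formulas of $\mathcal{L}_\nabla$ are built from variables and constants $1,\top,\bot$ by $\wedge,\vee,\otimes,\to$ and unary $\nabla$. Sequents $\Gamma\Rightarrow A$ have $\Gamma$ a finite sequence; $\nabla\Gamma$ applies $\nabla$ to each member; "$L\vdash A$" means $L$ derives $\Rightarrow A$. $\mathbf{STL}$ has axioms $A\Rightarrow A$, $\Rightarrow1$, $\nabla1\Rightarrow1$, $\Gamma\Rightarrow\top$, $\Gamma,\bot,\Sigma\Rightarrow A$ and rules (premises / conclusion): cut: $\Gamma\Rightarrow A$, $\Pi,A,\Sigma\Rightarrow B$ / $\Pi,\Gamma,\Sigma\Rightarrow B$; $L\wedge$: $\Gamma,A,\Sigma\Rightarrow C$ / $\Gamma,A\wedge B,\Sigma\Rightarrow C$ and $\Gamma,B,\Sigma\Rightarrow C$ / $\Gamma,A\wedge B,\Sigma\Rightarrow C$; $R\wedge$: $\Gamma\Rightarrow A$, $\Gamma\Rightarrow B$ / $\Gamma\Rightarrow A\wedge B$; $L\vee$: $\Gamma,A,\Sigma\Rightarrow C$, $\Gamma,B,\Sigma\Rightarrow C$ / $\Gamma,A\vee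 B,\Sigma\Rightarrow C$; $R\vee$: $\Gamma\Rightarrow A$ / $\Gamma\Rightarrow A\vee B$ and $\Gamma\Rightarrow B$ / $\Gamma\Rightarrow A\vee B$; $L1$: $\Gamma,\Sigma\Rightarrow A$ / $\Gamma,1,\Sigma\Rightarrow A$; $L\otimes$: $\Gamma,A,B,\Sigma\Rightarrow C$ / $\Gamma,A\otimes B,\Sigma\Rightarrow C$; $R\otimes$: $\Gamma\Rightarrow A$, $\Sigma\Rightarrow B$ / $\Gamma,\Sigma\Rightarrow A\otimes B$; $(\nabla)$: $A\Rightarrow B$ / $\nabla A\Rightarrow\nabla B$; Oplax: $\nabla A,\nabla B\Rightarrow C$ / $\nabla(A\otimes B)\Rightarrow C$; $L\to$: $\Gamma\Rightarrow A$, $\Pi,B,\Sigma\Rightarrow C$ / $\Pi,\Gamma,\nabla(A\to B),\Sigma\Rightarrow C$; $R\to$: $A,\nabla\Gamma\Rightarrow B$ / $\Gamma\Rightarrow A\to B$. Scheme $(F)$: $\Gamma\Rightarrow A$ / $\Gamma\Rightarrow\nabla A$; scheme $(wF)$: $\nabla A\Rightarrow\bot$ / $A\Rightarrow\bot$. $i\mathbf{STL}$ is $\mathbf{STL}$ plus left weakening, contraction and exchange; $i\mathbf{STL}(F)$, $i\mathbf{STL}(wF)$ add the respective scheme. For a space $Z$ and a union-preserving $\nabla:\mathcal{O}(Z)\to\mathcal{O}(Z)$, the implication is $W_1\to W_2=\Box(W_1\Rightarrow W_2)$ with $\Box$ the right adjoint of $\nabla$ and $\Rightarrow$ the Heyting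 implication (equivalently $W_1\cap\nabla W_2\subseteq W_3$ iff $W_2\subseteq W_1\to W_3$). A valuation of variables in $\mathcal{O}(Z)$ extends by $1,\top\mapsto Z$, $\bot\mapsto\emptyset$, $\wedge,\otimes\mapsto\cap$, $\vee\mapsto\cup$, $\nabla\mapsto\nabla$, $\to\mapsto\to$. $i\mathbf{ST}$ is the class of all such $(\mathcal{O}(Z),\nabla)$, $i\mathbf{ST}(F)$ those with $W\subseteq\nabla W$, $i\mathbf{ST}(wF)$ those with $\nabla W=\emptyset\Rightarrow W=\emptyset$. $Z\vDash_{\mathcal{C}}A$ means $V(A)=Z$ for every $\nabla$ with $(\mathcal{O}(Z),\nabla)\in\mathcal{C}$ and every valuation $V$. *)

theory Defs
  imports Main
begin

datatype fm =
    Var nat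
  | One
  | Top
  | Bot
  | And fm fm
  | Or fm fm
  | Tens fm fm
  | Imp fm fm
  | Nab fm

datatype logic = iSTL | iSTL_F | iSTL_wF

text \<open>All three logics contain STL plus left weakening, contraction and exchange;
  the scheme (F) is available only in iSTL_F, the scheme (wF) only in iSTL_wF.\<close>
inductive deriv :: "logic \<Rightarrow> fm list \<Rightarrow> fm \<Rightarrow> bool" for L :: logic where
  ax: "deriv L [A] A"
| oneR: "deriv L [] One"
| nabOne: "deriv L [Nab One] One"
| topR: "deriv L G Top"
| botL: "deriv L (G @ Bot # S) A"
| cut: "deriv L G A \<Longrightarrow> deriv L (P @ A # S) B \<Longrightarrow> deriv L (P @ G @ S) B"
| andL1: "deriv L (G @ A # S) C \<Longrightarrow> deriv L (G @ And A B # S) C"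
| andL2: "deriv L (G @ B # S) C \<Longrightarrow> deriv L (G @ And A B # S) C"
| andR: "deriv L G A \<Longrightarrow> deriv L G B \<Longrightarrow> deriv L G (And A B)"
| orL: "deriv L (G @ A # S) C \<Longrightarrow> deriv L (G @ B # S) C \<Longrightarrow> deriv L (G @ Or A B # S) C"
| orR1: "deriv L G A \<Longrightarrow> deriv L G (Or A B)"
| orR2: "deriv L G B \<Longrightarrow> deriv L G (Or A B)"
| oneL: "deriv L (G @ S) A \<Longrightarrow> deriv L (G @ One # S) A"
| tensL: "deriv L (G @ A # B # S) C \<Longrightarrow> deriv L (G @ Tens A B # S) C"
| tensR: "deriv L G A \<Longrightarrow> deriv L S B \<Longrightarrow> deriv L (G @ S) (Tens A B)"
| nab: "deriv L [A] B \<Longrightarrow> deriv L [Nab A] (Nab B)"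
| oplax: "deriv L [Nab A, Nab B] C \<Longrightarrow> deriv L [Nab (Tens A B)] C"
| impL: "deriv L G A \<Longrightarrow> deriv L (P @ B # S) C \<Longrightarrow> deriv L (P @ G @ Nab (Imp A B) # S) C"
| impR: "deriv L (A # map Nab G) B \<Longrightarrow> deriv L G (Imp A B)"
| weakL: "deriv L (G @ S) A \<Longrightarrow> deriv L (G @ B # S) A"
| contrL: "deriv L (G @ B # B # S) A \<Longrightarrow> deriv L (G @ B # S) A"
| exchL: "deriv L (G @ B # C # S) A \<Longrightarrow> deriv L (G @ C # B # S) A"
| schemeF: "L = iSTL_F \<Longrightarrow> deriv L G A \<Longrightarrow> deriv L G (Nab A)"
| schemewF: "L = iSTL_wF \<Longrightarrow> deriv L [Nab A] Bot \<Longrightarrow> deriv L [A] Bot"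

definition provable :: "logic \<Rightarrow> fm \<Rightarrow> bool" where
  "provable L A \<longleftrightarrow> deriv L [] A"

text \<open>Semantics on the discrete space X: the opens are all subsets of X.\<close>
definition opens :: "'a set \<Rightarrow> 'a set set" where
  "opens X = Pow X"

definition union_pres :: "'a set \<Rightarrow> ('a set \<Rightarrow> 'a set) \<Rightarrow> bool" where
  "union_pres X N \<longleftrightarrow> (\<forall>U\<in>opens X. N U \<in> opens X) \<and>
     (\<forall>S. S \<subseteq> opens X \<longrightarrow> N (\<Union>S) = \<Union>(N ` S))"

definition boxop :: "'a set \<Rightarrow> ('a set \<Rightarrow> 'a set) \<Rightarrow> 'a set \<Rightarrow> 'a set" where
  "boxop X N W = \<Union>{U \<in> opens X. N U \<subseteq> W}"

definition heyt :: "'a set \<Rightarrow> 'a set \<Rightarrow> 'a set \<Rightarrow> 'a set" where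
  "heyt X W1 W2 = \<Union>{U \<in> opens X. U \<inter> W1 \<subseteq> W2}"

definition simp_imp :: "'a set \<Rightarrow> ('a set \<Rightarrow> 'a set) \<Rightarrow> 'a set \<Rightarrow> 'a set \<Rightarrow> 'a set" where
  "simp_imp X N W1 W2 = boxop X N (heyt X W1 W2)"

fun eval :: "'a set \<Rightarrow> ('a set \<Rightarrow> 'a set) \<Rightarrow> (nat \<Rightarrow> 'a set) \<Rightarrow> fm \<Rightarrow> 'a set" where
  "eval X N V (Var p) = V p"
| "eval X N V One = X"
| "eval X N V Top = X"
| "eval X N V Bot = {}"
| "eval X N V (And A B) = eval X N V A \<inter> eval X N V B"
| "eval X N V (Or A B) = eval X N V A \<union> eval X N V B"
| "eval X N V (Tens A B) = eval X N V A \<inter> eval X N V B"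
| "eval X N V (Imp A B) = simp_imp X N (eval X N V A) (eval X N V B)"
| "eval X N V (Nab A) = N (eval X N V A)"

definition in_class :: "logic \<Rightarrow> 'a set \<Rightarrow> ('a set \<Rightarrow> 'a set) \<Rightarrow> bool" where
  "in_class L X N \<longleftrightarrow> union_pres X N \<and>
     (L = iSTL_F \<longrightarrow> (\<forall>W\<in>opens X. W \<subseteq> N W)) \<and>
     (L = iSTL_wF \<longrightarrow> (\<forall>W\<in>opens X. N W = {} \<longrightarrow> W = {}))"

definition valid :: "'a set \<Rightarrow> logic \<Rightarrow> fm \<Rightarrow> bool" where
  "valid X L A \<longleftrightarrow> (\<forall>N V. in_class L X N \<longrightarrow> (\<forall>p. V p \<in> opens X) \<longrightarrow> eval X N V A = X)"

end

theory Submission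
  imports Defs "HOL-Library.Countable"
begin


instance fm :: countable by countable_datatype

lemma weak_front: "deriv L G C \<Longrightarrow> deriv L (H @ G) C"
proof (induction H)
  case Nil then show ?case by simp
next
  case (Cons a H)
  then show ?case using deriv.weakL[of L "[]" "H @ G" C a] by simp
qed

lemma move_front: "deriv L (P @ G @ x # S) C \<Longrightarrow> deriv L (P @ x # G @ S) C"
proof (induction G arbitrary: P)
  case Nil then show ?case by simp
next
  case (Cons y G)
  have "deriv L ((P @ [y]) @ G @ x # S) C" using Cons.prems by simp
  then have "deriv L ((P @ [y]) @ x # G @ S) C" by (rule Cons.IH)
  then have "deriv L (P @ y # x # (G @ S)) C" by simp
  then have "deriv L (P @ x # y # (G @ S)) C" by (rule deriv.exchL)
  then show ?case by simp
qed

lemma contract1: "x \<in> set H \<Longrightarrow> deriv L (H @ x # S) C \<Longrightarrow> deriv L (H @ S) C"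
proof -
  assume "x \<in> set H" "deriv L (H @ x # S) C"
  then obtain H1 H2 where H: "H = H1 @ x # H2" by (meson split_list)
  have "deriv L ((H1 @ [x]) @ H2 @ x # S) C" using \<open>deriv L (H @ x # S) C\<close> H by simp
  then have "deriv L ((H1 @ [x]) @ x # H2 @ S) C" by (rule move_front)
  then have "deriv L (H1 @ x # x # (H2 @ S)) C" by simp
  then have "deriv L (H1 @ x # (H2 @ S)) C" by (rule deriv.contrL)
  then show ?thesis using H by simp
qed

lemma contract_all: "set G \<subseteq> set H \<Longrightarrow> deriv L (H @ G @ S) C \<Longrightarrow> deriv L (H @ S) C"
proof (induction G)
  case Nil then show ?case by simp
next
  case (Cons y G)
  have "deriv L (H @ G @ S) C"
    using contract1[of y H L "G @ S" C] Cons.prems by simp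
  then show ?case using Cons by simp
qed

lemma weaken: "deriv L G C \<Longrightarrow> set G \<subseteq> set H \<Longrightarrow> deriv L H C"
  using weak_front[of L G C H] contract_all[of G H L "[]" C] by simp

lemma cut0: "deriv L G A \<Longrightarrow> deriv L (A # S) B \<Longrightarrow> deriv L (G @ S) B"
  using deriv.cut[of L G A "[]" S B] by simp

lemma cut_set: "deriv L H F \<Longrightarrow> deriv L G C \<Longrightarrow> set G \<subseteq> insert F (set K) \<Longrightarrow> deriv L (H @ K) C"
  by (rule cut0, assumption, rule weaken, auto)

definition ptheory :: "logic \<Rightarrow> fm set \<Rightarrow> bool" where
  "ptheory L T \<longleftrightarrow> (\<forall>G A. set G \<subseteq> T \<longrightarrow> deriv L G A \<longrightarrow> A \<in> T) \<and> Bot \<notin> T \<and>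
     (\<forall>A B. Or A B \<in> T \<longrightarrow> A \<in> T \<or> B \<in> T)"

definition good where
  "good L T0 I T \<longleftrightarrow> T0 \<subseteq> T \<and> (\<forall>G D. set G \<subseteq> T \<longrightarrow> D \<in> I \<longrightarrow> \<not> deriv L G D)"

lemma not_good_insert:
  assumes "\<not> good L T0 I (insert A M)" "T0 \<subseteq> M"
  obtains G D where "set G \<subseteq> M" "D \<in> I" "deriv L (A # G) D"
proof -
  from assms obtain G D where "set G \<subseteq> insert A M" "D \<in> I" "deriv L G D"
    unfolding good_def by auto
  then show ?thesis using that[of "removeAll A G" D] weaken[of L G D "A # removeAll A G"]
    by auto
qed

lemma lindenbaum:
  assumes D0: "D0 \<in> I" and orI: "\<forall>C D. C \<in> I \<longrightarrow> D \<in> I \<longrightarrow> Or C D \<in> I"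
    and g0: "\<forall>G D. set G \<subseteq> T0 \<longrightarrow> D \<in> I \<longrightarrow> \<not> deriv L G D"
  shows "\<exists>T. ptheory L T \<and> T0 \<subseteq> T \<and> T \<inter> I = {}"
proof -
  let ?A = "{T. good L T0 I T}"
  have ne: "?A \<noteq> {}" using g0 unfolding good_def by auto
  have "\<exists>M\<in>?A. \<forall>X\<in>?A. M \<subseteq> X \<longrightarrow> X = M"
  proof (rule subset_Zorn_nonempty[OF ne])
    fix C assume C: "C \<noteq> {}" "subset.chain ?A C"
    show "\<Union>C \<in> ?A" unfolding mem_Collect_eq good_def
    proof (intro conjI allI impI)
      obtain B where "B \<in> C" using C(1) by auto
      then show "T0 \<subseteq> \<Union>C" using C(2) unfolding subset.chain_def good_def by blast
    next
      fix G D assume GD: "set G \<subseteq> \<Union>C" "D \<in> I"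
      show "\<not> deriv L G D"
      proof (cases "set G = {}")
        case True
        then show ?thesis using g0 GD by auto
      next
        case False
        then obtain B where "B \<in> C" "set G \<subseteq> B"
          using finite_subset_Union_chain[of "set G" C ?A] GD C by auto
        then show ?thesis using C GD unfolding subset.chain_def good_def by auto
      qed
    qed
  qed
  then obtain M where M: "good L T0 I M" and max: "\<And>X. good L T0 I X \<Longrightarrow> M \<subseteq> X \<Longrightarrow> X = M"
    by auto
  have T0M: "T0 \<subseteq> M" using M good_def by auto
  have bad: "\<And>G D. set G \<subseteq> M \<Longrightarrow> D \<in> I \<Longrightarrow> \<not> deriv L G D" using M good_def by auto
  have disj: "M \<inter> I = {}"
  proof (rule ccontr)
    assume "M \<inter> I \<noteq> {}" then obtain D where "D \<in> M" "D \<in> I" by auto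
    then show False using bad[of "[D]" D] deriv.ax by auto
  qed
  have bot: "Bot \<notin> M"
  proof
    assume "Bot \<in> M"
    then show False using bad[of "[Bot]" D0] D0 deriv.botL[of L "[]" "[]" D0] by auto
  qed
  have closed: "\<forall>G A. set G \<subseteq> M \<longrightarrow> deriv L G A \<longrightarrow> A \<in> M"
  proof (intro allI impI)
    fix G A assume GA: "set G \<subseteq> M" "deriv L G A"
    have "good L T0 I (insert A M)"
    proof (rule ccontr)
      assume "\<not> good L T0 I (insert A M)"
      then obtain G' D where "set G' \<subseteq> M" "D \<in> I" "deriv L (A # G') D"
        using not_good_insert T0M by blast
      then have "deriv L (G @ G') D" using cut0 GA by blast
      then show False using bad \<open>set G' \<subseteq> M\<close> GA \<open>D \<in> I\<close> by auto
    qed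
    then show "A \<in> M" using max[of "insert A M"] by auto
  qed
  have prime: "\<forall>A B. Or A B \<in> M \<longrightarrow> A \<in> M \<or> B \<in> M"
  proof (intro allI impI)
    fix A B assume AB: "Or A B \<in> M"
    show "A \<in> M \<or> B \<in> M"
    proof (rule ccontr)
      assume "\<not> (A \<in> M \<or> B \<in> M)"
      then have "\<not> good L T0 I (insert A M)" "\<not> good L T0 I (insert B M)"
        using max[of "insert A M"] max[of "insert B M"] by auto
      then obtain G1 D1 G2 D2 where 1: "set G1 \<subseteq> M" "D1 \<in> I" "deriv L (A # G1) D1"
        and 2: "set G2 \<subseteq> M" "D2 \<in> I" "deriv L (B # G2) D2"
        using not_good_insert T0M by metis
      have a: "deriv L (A # G1 @ G2) (Or D1 D2)"
        using deriv.orR1[OF weaken[OF 1(3), of "A # G1 @ G2"]] by auto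
      have b: "deriv L (B # G1 @ G2) (Or D1 D2)"
        using deriv.orR2[OF weaken[OF 2(3), of "B # G1 @ G2"]] by auto
      have "deriv L (Or A B # G1 @ G2) (Or D1 D2)"
        using deriv.orL[of L "[]" A "G1 @ G2" "Or D1 D2" B] a b by simp
      then show False using bad[of "Or A B # G1 @ G2" "Or D1 D2"] 1 2 AB orI by auto
    qed
  qed
  show ?thesis using closed bot prime disj T0M unfolding ptheory_def by blast
qed



lemma pt_closed: "ptheory L T \<Longrightarrow> set G \<subseteq> T \<Longrightarrow> deriv L G A \<Longrightarrow> A \<in> T"
  unfolding ptheory_def by blast

lemma pt_one: "ptheory L T \<Longrightarrow> One \<in> T"
  using pt_closed[of L T "[]" One] deriv.oneR by auto
lemma pt_top: "ptheory L T \<Longrightarrow> Top \<in> T"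
  using pt_closed[of L T "[]" Top] deriv.topR by auto
lemma pt_bot: "ptheory L T \<Longrightarrow> Bot \<notin> T"
  unfolding ptheory_def by blast

lemma pt_and: "ptheory L T \<Longrightarrow> And A B \<in> T \<longleftrightarrow> A \<in> T \<and> B \<in> T"
proof -
  assume T: "ptheory L T"
  have 1: "deriv L [And A B] A" using deriv.andL1[of L "[]" A "[]" A B] deriv.ax by simp
  have 2: "deriv L [And A B] B" using deriv.andL2[of L "[]" B "[]" B A] deriv.ax by simp
  have 3: "deriv L [A, B] (And A B)"
    by (rule deriv.andR; rule weaken[OF deriv.ax]; simp)
  show ?thesis
  proof
    assume "And A B \<in> T" then have s: "set [And A B] \<subseteq> T" by simp
    show "A \<in> T \<and> B \<in> T" using pt_closed[OF T s 1] pt_closed[OF T s 2] by simp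
  next
    assume "A \<in> T \<and> B \<in> T" then have s: "set [A, B] \<subseteq> T" by simp
    show "And A B \<in> T" using pt_closed[OF T s 3] .
  qed
qed

lemma pt_tens: "ptheory L T \<Longrightarrow> Tens A B \<in> T \<longleftrightarrow> A \<in> T \<and> B \<in> T"
proof -
  assume T: "ptheory L T"
  have 1: "deriv L [Tens A B] A" using deriv.tensL[of L "[]" A B "[]" A] weaken[OF deriv.ax[of L A], of "[A,B]"] by simp
  have 2: "deriv L [Tens A B] B" using deriv.tensL[of L "[]" A B "[]" B] weaken[OF deriv.ax[of L B], of "[A,B]"] by simp
  have 3: "deriv L [A, B] (Tens A B)"
    using deriv.tensR[OF deriv.ax deriv.ax, of L A B] by simp
  show ?thesis
  proof
    assume "Tens A B \<in> T" then have s: "set [Tens A B] \<subseteq> T" by simp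
    show "A \<in> T \<and> B \<in> T" using pt_closed[OF T s 1] pt_closed[OF T s 2] by simp
  next
    assume "A \<in> T \<and> B \<in> T" then have s: "set [A, B] \<subseteq> T" by simp
    show "Tens A B \<in> T" using pt_closed[OF T s 3] .
  qed
qed

lemma pt_or: "ptheory L T \<Longrightarrow> Or A B \<in> T \<longleftrightarrow> A \<in> T \<or> B \<in> T"
proof -
  assume T: "ptheory L T"
  have 1: "deriv L [A] (Or A B)" by (rule deriv.orR1, rule deriv.ax)
  have 2: "deriv L [B] (Or A B)" by (rule deriv.orR2, rule deriv.ax)
  show ?thesis
  proof
    assume "Or A B \<in> T" then show "A \<in> T \<or> B \<in> T" using T unfolding ptheory_def by blast
  next
    assume "A \<in> T \<or> B \<in> T"
    then show "Or A B \<in> T"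
    proof
      assume "A \<in> T" then have s: "set [A] \<subseteq> T" by simp
      show ?thesis using pt_closed[OF T s 1] .
    next
      assume "B \<in> T" then have s: "set [B] \<subseteq> T" by simp
      show ?thesis using pt_closed[OF T s 2] .
    qed
  qed
qed

lemma nab_bot: "deriv L [Nab Bot] Bot"
proof -
  have a: "deriv L [Nab (Imp Top Bot)] Bot"
    using deriv.impL[of L "[]" Top "[]" Bot "[]" Bot] deriv.topR deriv.ax by simp
  have b: "deriv L [Bot] (Imp Top Bot)" using deriv.botL[of L "[]" "[]"] by simp
  show ?thesis using cut0[OF deriv.nab[OF b] a] by simp
qed

lemma nab_or: "deriv L [Nab (Or C D)] (Or (Nab C) (Nab D))"
proof -
  let ?E = "Or (Nab C) (Nab D)"
  have c: "deriv L [C] (Imp Top ?E)"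
    by (rule deriv.impR, simp, rule deriv.orR1, rule weaken[OF deriv.ax], auto)
  have d: "deriv L [D] (Imp Top ?E)"
    by (rule deriv.impR, simp, rule deriv.orR2, rule weaken[OF deriv.ax], auto)
  have "deriv L [Or C D] (Imp Top ?E)" using deriv.orL[of L "[]" C "[]" _ D] c d by simp
  then have a: "deriv L [Nab (Or C D)] (Nab (Imp Top ?E))" by (rule deriv.nab)
  have b: "deriv L [Nab (Imp Top ?E)] ?E"
    using deriv.impL[of L "[]" Top "[]" ?E "[]" ?E] deriv.topR deriv.ax by simp
  show ?thesis using cut0[OF a b] by simp
qed

lemma list_of_image:
  assumes "set G \<subseteq> insert A (f ` T)"
  shows "\<exists>Gs. set Gs \<subseteq> T \<and> set G \<subseteq> set (A # map f Gs)"
proof -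
  have "set G - {A} \<subseteq> f ` T" using assms by auto
  then obtain C where "C \<subseteq> T" "finite C" "set G - {A} = f ` C"
    using finite_subset_image[of "set G - {A}" f T] by auto
  moreover obtain Gs where "set Gs = C" using finite_list \<open>finite C\<close> by auto
  ultimately show ?thesis by (intro exI[of _ Gs]) auto
qed

lemma orL1: "deriv L [C] B \<Longrightarrow> deriv L [D] B \<Longrightarrow> deriv L [Or C D] B"
  using deriv.orL[of L "[]" C "[]" B D] by simp

lemma exist_imp:
  assumes T: "ptheory L T" and n: "Imp A B \<notin> T"
  shows "\<exists>D. ptheory L D \<and> Nab ` T \<subseteq> D \<and> A \<in> D \<and> B \<notin> D"
proof -
  have p1: "B \<in> {E. deriv L [E] B}" using deriv.ax by auto
  have p2: "\<forall>C D. C \<in> {E. deriv L [E] B} \<longrightarrow> D \<in> {E. deriv L [E] B} \<longrightarrow> Or C D \<in> {E. deriv L [E] B}"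
    using orL1 by blast
  have p3: "\<forall>G D. set G \<subseteq> insert A (Nab ` T) \<longrightarrow> D \<in> {E. deriv L [E] B} \<longrightarrow> \<not> deriv L G D"
  proof (intro allI impI notI)
    fix G D assume G: "set G \<subseteq> insert A (Nab ` T)" and "D \<in> {E. deriv L [E] B}" "deriv L G D"
    then have "deriv L G B" using cut0[of L G D "[]" B] by auto
    obtain Gs where "set Gs \<subseteq> T" "set G \<subseteq> set (A # map Nab Gs)" using list_of_image[OF G] by auto
    then have "deriv L (A # map Nab Gs) B" using weaken[OF \<open>deriv L G B\<close>] by blast
    then have "deriv L Gs (Imp A B)" by (rule deriv.impR)
    then show False using pt_closed[OF T \<open>set Gs \<subseteq> T\<close>] n by auto
  qed
  have "\<exists>D. ptheory L D \<and> insert A (Nab ` T) \<subseteq> D \<and> D \<inter> {E. deriv L [E] B} = {}"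
    by (rule lindenbaum[OF p1 p2 p3])
  then obtain D where "ptheory L D" "insert A (Nab ` T) \<subseteq> D" "D \<inter> {E. deriv L [E] B} = {}"
    by blast
  moreover have "B \<in> {E. deriv L [E] B}" using deriv.ax by simp
  ultimately show ?thesis by blast
qed

lemma exist_nab:
  assumes D: "ptheory L D" and n: "Nab A \<in> D"
  shows "\<exists>T. ptheory L T \<and> Nab ` T \<subseteq> D \<and> A \<in> T"
proof -
  have p1: "Bot \<in> {E. Nab E \<notin> D}"
  proof
    show "Nab Bot \<notin> D"
    proof
      assume "Nab Bot \<in> D" then have s: "set [Nab Bot] \<subseteq> D" by simp
      show False using pt_closed[OF D s nab_bot] pt_bot[OF D] by simp
    qed
  qed
  have p2: "\<forall>C E. C \<in> {E. Nab E \<notin> D} \<longrightarrow> E \<in> {E. Nab E \<notin> D} \<longrightarrow> Or C E \<in> {E. Nab E \<notin> D}"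
  proof (intro allI impI)
    fix C E assume "C \<in> {E. Nab E \<notin> D}" "E \<in> {E. Nab E \<notin> D}"
    then have c: "Nab C \<notin> D" "Nab E \<notin> D" by auto
    show "Or C E \<in> {E. Nab E \<notin> D}"
    proof
      show "Nab (Or C E) \<notin> D"
      proof
        assume "Nab (Or C E) \<in> D" then have s: "set [Nab (Or C E)] \<subseteq> D" by simp
        show False using pt_closed[OF D s nab_or] pt_or[OF D] c by simp
      qed
    qed
  qed
  have p3: "\<forall>G E. set G \<subseteq> {A} \<longrightarrow> E \<in> {E. Nab E \<notin> D} \<longrightarrow> \<not> deriv L G E"
  proof (intro allI impI notI)
    fix G E assume "set G \<subseteq> {A}" "E \<in> {E. Nab E \<notin> D}" "deriv L G E"
    then have "deriv L [A] E" using weaken[OF \<open>deriv L G E\<close>, of "[A]"] by simp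
    then have "deriv L [Nab A] (Nab E)" by (rule deriv.nab)
    moreover have s: "set [Nab A] \<subseteq> D" using n by simp
    ultimately show False using pt_closed[OF D s] \<open>E \<in> _\<close> by simp
  qed
  have "\<exists>T. ptheory L T \<and> {A} \<subseteq> T \<and> T \<inter> {E. Nab E \<notin> D} = {}"
    by (rule lindenbaum[OF p1 p2 p3])
  then obtain T where "ptheory L T" "{A} \<subseteq> T" "T \<inter> {E. Nab E \<notin> D} = {}" by blast
  then show ?thesis by blast
qed

fun bigAnd :: "fm list \<Rightarrow> fm" where
  "bigAnd [] = Top"
| "bigAnd (x # xs) = And x (bigAnd xs)"

lemma bigAnd_R: "deriv L Gs (bigAnd Gs)"
proof (induction Gs)
  case Nil then show ?case by (simp add: deriv.topR)
next
  case (Cons x xs)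
  show ?case by (simp, rule deriv.andR, rule weaken[OF deriv.ax], simp,
      rule weaken[OF Cons.IH], auto)
qed

lemma bigAnd_L: "F \<in> set Gs \<Longrightarrow> deriv L [bigAnd Gs] F"
proof (induction Gs)
  case Nil then show ?case by simp
next
  case (Cons x xs)
  show ?case
  proof (cases "F = x")
    case True then show ?thesis using deriv.andL1[of L "[]" x "[]" x] deriv.ax by simp
  next
    case False then have "deriv L [bigAnd xs] F" using Cons by auto
    then show ?thesis using deriv.andL2[of L "[]" "bigAnd xs" "[]" F x] by simp
  qed
qed

lemma cut_many: "set G \<subseteq> set Fs \<union> set K \<Longrightarrow> deriv L G C \<Longrightarrow> \<forall>F\<in>set Fs. deriv L [X] F \<Longrightarrow> X \<in> set K
  \<Longrightarrow> deriv L K C"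
proof (induction Fs arbitrary: G)
  case Nil then show ?case using weaken by auto
next
  case (Cons F Fs)
  have "deriv L ([X] @ Fs @ K) C"
    by (rule cut_set[of L "[X]" F G]) (use Cons.prems in auto)
  then show ?case using Cons.IH[of "X # Fs @ K"] Cons.prems by auto
qed

lemma list_of_image':
  assumes "set G \<subseteq> f ` T"
  shows "\<exists>Gs. set Gs \<subseteq> T \<and> set G = set (map f Gs)"
proof -
  obtain C where "C \<subseteq> T" "finite C" "set G = f ` C"
    using finite_subset_image[of "set G" f T] assms by auto
  moreover obtain Gs where "set Gs = C" using finite_list \<open>finite C\<close> by auto
  ultimately show ?thesis by (intro exI[of _ Gs]) auto
qed

lemma exist_serial:
  assumes T: "ptheory L T" and wf: "L = iSTL_wF"
  shows "\<exists>D. ptheory L D \<and> Nab ` T \<subseteq> D"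
proof -
  have p1: "Bot \<in> {E. deriv L [E] Bot}" using deriv.ax by auto
  have p2: "\<forall>C D. C \<in> {E. deriv L [E] Bot} \<longrightarrow> D \<in> {E. deriv L [E] Bot} \<longrightarrow> Or C D \<in> {E. deriv L [E] Bot}"
    using orL1 by blast
  have p3: "\<forall>G D. set G \<subseteq> Nab ` T \<longrightarrow> D \<in> {E. deriv L [E] Bot} \<longrightarrow> \<not> deriv L G D"
  proof (intro allI impI notI)
    fix G D assume G: "set G \<subseteq> Nab ` T" and "D \<in> {E. deriv L [E] Bot}" "deriv L G D"
    then have GB: "deriv L G Bot" using cut0[of L G D "[]" Bot] by simp
    obtain Gs where Gs: "set Gs \<subseteq> T" "set G = set (map Nab Gs)"
      using list_of_image'[OF G] by auto
    have "deriv L [Nab (bigAnd Gs)] Bot"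
    proof (rule cut_many[of "G" "map Nab Gs" "[Nab (bigAnd Gs)]" L Bot "Nab (bigAnd Gs)"])
      show "set G \<subseteq> set (map Nab Gs) \<union> set [Nab (bigAnd Gs)]" using Gs by auto
      show "deriv L G Bot" by (rule GB)
      show "\<forall>F\<in>set (map Nab Gs). deriv L [Nab (bigAnd Gs)] F"
      proof
      fix F assume "F \<in> set (map Nab Gs)"
      then obtain F0 where "F0 \<in> set Gs" "F = Nab F0" by auto
      then show "deriv L [Nab (bigAnd Gs)] F" using deriv.nab[OF bigAnd_L] by simp
    qed
    qed auto
    then have "deriv L [bigAnd Gs] Bot" by (rule deriv.schemewF[OF wf])
    moreover have "bigAnd Gs \<in> T" using pt_closed[OF T Gs(1) bigAnd_R] .
    then have "set [bigAnd Gs] \<subseteq> T" by simp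
    ultimately show False using pt_closed[OF T] pt_bot[OF T] by blast
  qed
  have "\<exists>D. ptheory L D \<and> Nab ` T \<subseteq> D \<and> D \<inter> {E. deriv L [E] Bot} = {}"
    by (rule lindenbaum[OF p1 p2 p3])
  then obtain D where "ptheory L D" "Nab ` T \<subseteq> D" by blast
  then show ?thesis by blast
qed

lemma refl_F: "ptheory L T \<Longrightarrow> L = iSTL_F \<Longrightarrow> Nab ` T \<subseteq> T"
proof
  fix x assume T: "ptheory L T" and F: "L = iSTL_F" and "x \<in> Nab ` T"
  then obtain A where A: "A \<in> T" "x = Nab A" by auto
  have "deriv L [A] (Nab A)" by (rule deriv.schemeF[OF F deriv.ax])
  moreover have "set [A] \<subseteq> T" using A by simp
  ultimately show "x \<in> T" using pt_closed[OF T] A by blast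
qed



lemma heyt_eq: "heyt X W1 W2 = {x\<in>X. x \<in> W1 \<longrightarrow> x \<in> W2}"
  unfolding heyt_def opens_def by auto

lemma boxop_eq:
  assumes "\<And>U. N U = (\<Union>x\<in>U. N {x})"
  shows "boxop X N W = {x\<in>X. N {x} \<subseteq> W}"
proof
  show "boxop X N W \<subseteq> {x\<in>X. N {x} \<subseteq> W}"
  proof
    fix x assume "x \<in> boxop X N W"
    then obtain U where U: "U \<subseteq> X" "N U \<subseteq> W" "x \<in> U" unfolding boxop_def opens_def by auto
    have "N {x} \<subseteq> N U" using assms[of U] U(3) by auto
    then show "x \<in> {x\<in>X. N {x} \<subseteq> W}" using U by auto
  qed
next
  show "{x\<in>X. N {x} \<subseteq> W} \<subseteq> boxop X N W"
    unfolding boxop_def opens_def by auto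
qed

lemma impL0: "deriv L [A, Nab (Imp A B)] B"
  using deriv.impL[of L "[A]" A "[]" B "[]" B] deriv.ax by simp

lemma completeness:
  fixes f :: "nat set \<Rightarrow> 'a" and X :: "'a set"
  assumes f: "inj f" "range f \<subseteq> X" and v: "valid X L A0"
  shows "provable L A0"
proof (rule ccontr)
  assume np: "\<not> provable L A0"
  have p1: "A0 \<in> {E. deriv L [E] A0}" using deriv.ax by simp
  have p2: "\<forall>C D. C \<in> {E. deriv L [E] A0} \<longrightarrow> D \<in> {E. deriv L [E] A0} \<longrightarrow> Or C D \<in> {E. deriv L [E] A0}"
    using orL1 by blast
  have p3: "\<forall>G D. set G \<subseteq> {} \<longrightarrow> D \<in> {E. deriv L [E] A0} \<longrightarrow> \<not> deriv L G D"
  proof (intro allI impI notI)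
    fix G D assume "set G \<subseteq> {}" "D \<in> {E. deriv L [E] A0}" "deriv L G D"
    then have "deriv L [] A0" using cut0[of L G D "[]" A0] by simp
    then show False using np unfolding provable_def by simp
  qed
  have "\<exists>T. ptheory L T \<and> {} \<subseteq> T \<and> T \<inter> {E. deriv L [E] A0} = {}"
    by (rule lindenbaum[OF p1 p2 p3])
  then obtain G0 where G0: "ptheory L G0" "A0 \<notin> G0" using p1 by blast
  define P where "P = {T. ptheory L T}"
  define h where "h = (\<lambda>T::fm set. f (to_nat ` T))"
  have injh: "inj h" unfolding h_def
    using f(1) inj_image_eq_iff[OF inj_to_nat] unfolding inj_def by metis
  have hX: "\<And>T. h T \<in> X" unfolding h_def using f(2) by auto
  define g where "g = (\<lambda>x. if x \<in> h ` P then inv_into P h x else G0)"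
  have gh: "\<And>T. T \<in> P \<Longrightarrow> g (h T) = T" unfolding g_def
    using inv_into_f_f[OF inj_on_subset[OF injh subset_UNIV]] by auto
  have gP: "\<And>x. ptheory L (g x)" unfolding g_def using G0(1) inv_into_into[of _ h P]
    unfolding P_def by auto
  define N where "N = (\<lambda>W. {y \<in> X. \<exists>x\<in>W. x \<in> X \<and> Nab ` g x \<subseteq> g y})"
  define V where "V = (\<lambda>p. {x \<in> X. Var p \<in> g x})"
  have NX: "\<And>x. x \<in> X \<Longrightarrow> N {x} = {y\<in>X. Nab ` g x \<subseteq> g y}" unfolding N_def by auto
  have Nsing: "\<And>U. N U = (\<Union>x\<in>U. N {x})" unfolding N_def by auto
  have cls: "in_class L X N"
    unfolding in_class_def
  proof (intro conjI impI ballI allI)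
    show "union_pres X N" unfolding union_pres_def opens_def N_def by auto
  next
    fix W assume "L = iSTL_F" "W \<in> opens X"
    then show "W \<subseteq> N W" unfolding N_def opens_def using refl_F[OF gP] by blast
  next
    fix W assume wf: "L = iSTL_wF" and "W \<in> opens X" and e: "N W = {}"
    show "W = {}"
    proof (rule ccontr)
      assume "W \<noteq> {}" then obtain x where x: "x \<in> W" by auto
      then have xX: "x \<in> X" using \<open>W \<in> opens X\<close> unfolding opens_def by auto
      obtain D where D: "ptheory L D" "Nab ` g x \<subseteq> D" using exist_serial[OF gP wf] by blast
      have "h D \<in> N W" unfolding N_def using hX gh[of D] D x xX unfolding P_def by auto
      then show False using e by auto
    qed
  qed
  have Vo: "\<forall>p. V p \<in> opens X" unfolding V_def opens_def by auto
  have truth: "eval X N V B = {x\<in>X. B \<in> g x}" for B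
  proof (induction B)
    case (Var p) then show ?case by (simp add: V_def)
  next
    case One then show ?case using pt_one[OF gP] by auto
  next
    case Top then show ?case using pt_top[OF gP] by auto
  next
    case Bot then show ?case using pt_bot[OF gP] by auto
  next
    case (And A B) then show ?case using pt_and[OF gP] by auto
  next
    case (Or A B) then show ?case using pt_or[OF gP] by auto
  next
    case (Tens A B) then show ?case using pt_tens[OF gP] by auto
  next
    case (Imp A B)
    have e: "eval X N V (Imp A B) = {x\<in>X. N {x} \<subseteq> {z\<in>X. z \<in> eval X N V A \<longrightarrow> z \<in> eval X N V B}}"
      unfolding eval.simps(8) simp_imp_def boxop_eq[OF Nsing] heyt_eq by (rule refl)
    have e2: "eval X N V (Imp A B) = {x\<in>X. \<forall>y\<in>X. Nab ` g x \<subseteq> g y \<longrightarrow> A \<in> g y \<longrightarrow> B \<in> g y}"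
      unfolding e Imp.IH by (auto simp: NX)
    show ?case unfolding e2
    proof (rule set_eqI, rule iffI)
      fix x assume "x \<in> {x\<in>X. \<forall>y\<in>X. Nab ` g x \<subseteq> g y \<longrightarrow> A \<in> g y \<longrightarrow> B \<in> g y}"
      then have xX: "x \<in> X" and H: "\<And>y. y \<in> X \<Longrightarrow> Nab ` g x \<subseteq> g y \<Longrightarrow> A \<in> g y \<Longrightarrow> B \<in> g y"
        by auto
      show "x \<in> {x\<in>X. Imp A B \<in> g x}"
      proof (rule ccontr)
        assume "x \<notin> {x\<in>X. Imp A B \<in> g x}"
        then have nI: "Imp A B \<notin> g x" using xX by auto
        obtain D where D: "ptheory L D" "Nab ` g x \<subseteq> D" "A \<in> D" "B \<notin> D"
          using exist_imp[OF gP[of x] nI] by blast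
        have ghD: "g (h D) = D" using gh D(1) unfolding P_def by auto
        have "B \<in> g (h D)"
        proof (rule H)
          show "h D \<in> X" by (rule hX)
          show "Nab ` g x \<subseteq> g (h D)" unfolding ghD by (rule D(2))
          show "A \<in> g (h D)" unfolding ghD by (rule D(3))
        qed
        then show False using D(4) unfolding ghD by simp
      qed
    next
      fix x assume x: "x \<in> {x\<in>X. Imp A B \<in> g x}"
      have "B \<in> g y" if "y \<in> X" "Nab ` g x \<subseteq> g y" "A \<in> g y" for y
      proof -
        have "Imp A B \<in> g x" using x by simp
        then have "Nab (Imp A B) \<in> g y" using that(2) by blast
        then have "set [A, Nab (Imp A B)] \<subseteq> g y" using that(3) by simp
        then show ?thesis by (rule pt_closed[OF gP _ impL0])
      qed
      then show "x \<in> {x\<in>X. \<forall>y\<in>X. Nab ` g x \<subseteq> g y \<longrightarrow> A \<in> g y \<longrightarrow> B \<in> g y}"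
        using x by auto
    qed
  next
    case (Nab A)
    have e: "eval X N V (Nab A) = {y \<in> X. \<exists>x\<in>X. A \<in> g x \<and> Nab ` g x \<subseteq> g y}"
      using Nab.IH unfolding N_def by auto
    show ?case unfolding e
    proof (rule set_eqI, rule iffI)
      fix y assume "y \<in> {y \<in> X. \<exists>x\<in>X. A \<in> g x \<and> Nab ` g x \<subseteq> g y}"
      then show "y \<in> {x\<in>X. Nab A \<in> g x}" by auto
    next
      fix y assume y: "y \<in> {x\<in>X. Nab A \<in> g x}"
      then have yX: "y \<in> X" and yN: "Nab A \<in> g y" by simp_all
      obtain T where T: "ptheory L T" "Nab ` T \<subseteq> g y" "A \<in> T"
        using exist_nab[OF gP[of y] yN] by blast
      have ghT: "g (h T) = T" using gh T(1) unfolding P_def by simp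
      have "h T \<in> X \<and> A \<in> g (h T) \<and> Nab ` g (h T) \<subseteq> g y" unfolding ghT using hX T by simp
      then show "y \<in> {y \<in> X. \<exists>x\<in>X. A \<in> g x \<and> Nab ` g x \<subseteq> g y}"
        using yX by blast
    qed
  qed
  have "eval X N V A0 = X" using v cls Vo unfolding valid_def by blast
  moreover have "g (h G0) = G0" using gh G0(1) unfolding P_def by auto
  ultimately show False using truth[of A0] hX[of G0] G0(2) by auto
qed

theorem theorem8p11:
  fixes X :: "'a set"
  assumes card: "\<exists>f :: nat set \<Rightarrow> 'a. inj f \<and> range f \<subseteq> X"
  shows "\<forall>A. (valid X iSTL A \<longrightarrow> provable iSTL A)
          \<and> (valid X iSTL_F A \<longrightarrow> provable iSTL_F A)
          \<and> (valid X iSTL_wF A \<longrightarrow> provable iSTL_wF A)"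
  using card completeness by blast

end
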